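(* Let $\mathcal{X}$ be a nonempty finite set and $k:\mathcal{X}\times\mathcal{X}\to\mathbb{R}_{\ge 0}$. Then $k$ is a strong kernel if and only if $k$ is induced by some hierarchy on $\mathcal{X}$.
   Context: A rooted tree is a finite tree $T$ with a distinguished root vertex $r$. For a vertex $v$, its parent $p(v)$ is the vertex following $v$ on the unique path from $v$ to $r$, with the convention $p(r)=r$. The ancestors of $v$ are the vertices on the path from $v$ to $r$ (including $v$ and $r$); the depth of $v$ is the number of edges on this path. The lowest common ancestor $\mathrm{LCA}(u,v)$ is the unique vertex of maximum depth that is an ancestor of both $u$ and $v$. A hierarchy on a set $\mathcal{X}$ is a pair $(T,w)$ where $T$ is a rooted tree whose set of leaves is exactly $\mathcal{X}$, and $w:V(T)\to\mathbb{R}_{\ge 0}$ satisfies $w(v)\ge w(p(v))$ for all $v\in V(T)$. The kernel induced by $(T,w)$ is $k(x,y)=w(\mathrm{LCA}(x,y))$ for $x,y\in\mathcal{X}$. A strong kernel on a set $\mathcal{X}$ is a symmetric function $k:\mathcal{X}\times\mathcal{X}\to\mathbb{R}_{\ge 0}$ such that $k(x,y)\ge\min\{k(x,z),k(z,y)\}$ for all $x,y,z\in\mathcal{X}$. *)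

theory Defs
  imports Complex_Main
begin

text \<open>Vertices of the tree have type 'a + nat: leaves are the elements Inl x of the
ground set, internal vertices are labelled by Inr n (any finite tree with leaf
set X is isomorphic to such a tree).\<close>

definition rooted_tree :: "'v set \<Rightarrow> 'v \<Rightarrow> ('v \<Rightarrow> 'v) \<Rightarrow> bool" where
  "rooted_tree V r p \<longleftrightarrow> finite V \<and> r \<in> V \<and> p r = r \<and> (\<forall>v\<in>V. p v \<in> V)
     \<and> (\<forall>v\<in>V. \<exists>n. (p ^^ n) v = r)"

definition ancestors :: "('v \<Rightarrow> 'v) \<Rightarrow> 'v \<Rightarrow> 'v set" where
  "ancestors p v = {(p ^^ n) v | n. True}"

definition depth :: "('v \<Rightarrow> 'v) \<Rightarrow> 'v \<Rightarrow> 'v \<Rightarrow> nat" where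
  "depth p r v = (LEAST n. (p ^^ n) v = r)"

definition lca :: "('v \<Rightarrow> 'v) \<Rightarrow> 'v \<Rightarrow> 'v \<Rightarrow> 'v \<Rightarrow> 'v" where
  "lca p r u v = (THE a. a \<in> ancestors p u \<inter> ancestors p v \<and>
      (\<forall>b \<in> ancestors p u \<inter> ancestors p v. depth p r b \<le> depth p r a))"

definition leaves :: "'v set \<Rightarrow> ('v \<Rightarrow> 'v) \<Rightarrow> 'v set" where
  "leaves V p = {v \<in> V. \<not> (\<exists>u\<in>V. u \<noteq> v \<and> p u = v)}"

definition hierarchy ::
  "'a set \<Rightarrow> ('a + nat) set \<Rightarrow> ('a + nat) \<Rightarrow> (('a + nat) \<Rightarrow> ('a + nat)) \<Rightarrow> (('a + nat) \<Rightarrow> real) \<Rightarrow> bool" where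
  "hierarchy X V r p w \<longleftrightarrow> rooted_tree V r p \<and> leaves V p = Inl ` X
     \<and> (\<forall>v\<in>V. 0 \<le> w v \<and> w (p v) \<le> w v)"

definition strong_kernel :: "'a set \<Rightarrow> ('a \<Rightarrow> 'a \<Rightarrow> real) \<Rightarrow> bool" where
  "strong_kernel X k \<longleftrightarrow>
     (\<forall>x\<in>X. \<forall>y\<in>X. k x y = k y x \<and> 0 \<le> k x y) \<and>
     (\<forall>x\<in>X. \<forall>y\<in>X. \<forall>z\<in>X. min (k x z) (k z y) \<le> k x y)"

end

theory Submission
  imports Defs "HOL-Library.Nat_Bijection"
begin


lemma funpow_fix: "p r = r \<Longrightarrow> (p ^^ n) r = r"
  by (induction n) auto

lemma anc_V: "rooted_tree V r p \<Longrightarrow> v \<in> V \<Longrightarrow> (p ^^ n) v \<in> V"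
  by (induction n) (auto simp: rooted_tree_def)

lemma anc_refl: "v \<in> ancestors p v"
  unfolding ancestors_def by (auto intro: exI[of _ 0])

lemma anc_trans: "a \<in> ancestors p b \<Longrightarrow> b \<in> ancestors p c \<Longrightarrow> a \<in> ancestors p c"
proof -
  assume "a \<in> ancestors p b" "b \<in> ancestors p c"
  then obtain i j where "a = (p^^i) b" "b = (p^^j) c" unfolding ancestors_def by auto
  then have "a = (p^^(i+j)) c" by (simp add: funpow_add)
  then show ?thesis unfolding ancestors_def by auto
qed

lemma anc_cmp: "a \<in> ancestors p v \<Longrightarrow> b \<in> ancestors p v \<Longrightarrow> a \<in> ancestors p b \<or> b \<in> ancestors p a"
proof -
  assume "a \<in> ancestors p v" "b \<in> ancestors p v"
  then obtain i j where a: "a = (p^^i) v" and b: "b = (p^^j) v" unfolding ancestors_def by auto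
  show ?thesis
  proof (cases "i \<le> j")
    case True
    then have "b = (p^^(j-i)) a" using a b by (metis funpow_add comp_apply le_add_diff_inverse2)
    then show ?thesis unfolding ancestors_def by auto
  next
    case False
    then have "a = (p^^(i-j)) b" using a b by (metis funpow_add comp_apply le_add_diff_inverse2 nat_le_linear)
    then show ?thesis unfolding ancestors_def by auto
  qed
qed

lemma depth_pow:
  assumes rt: "rooted_tree V r p" and v: "v \<in> V"
  shows "depth p r ((p^^j) v) = depth p r v - j"
proof -
  have ex: "\<exists>n. (p^^n) v = r" using rt v by (auto simp: rooted_tree_def)
  define d where "d = depth p r v"
  have dr: "(p^^d) v = r" unfolding d_def depth_def using ex by (rule LeastI_ex)
  have dmin: "\<And>n. (p^^n) v = r \<Longrightarrow> d \<le> n" unfolding d_def depth_def by (rule Least_le)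
  have pr: "p r = r" using rt by (simp add: rooted_tree_def)
  show ?thesis
  proof (cases "j \<le> d")
    case True
    have e: "(p^^(d-j)) ((p^^j) v) = r" using dr True by (metis funpow_add comp_apply le_add_diff_inverse2)
    have "depth p r ((p^^j) v) = d - j"
      unfolding depth_def
    proof (rule Least_equality)
      show "(p^^(d-j)) ((p^^j) v) = r" by (rule e)
    next
      fix y assume "(p^^y) ((p^^j) v) = r"
      then have "(p^^(y+j)) v = r" by (simp add: funpow_add)
      then have "d \<le> y + j" by (rule dmin)
      then show "d - j \<le> y" by simp
    qed
    then show ?thesis by (simp add: d_def)
  next
    case False
    then have "(p^^j) v = (p^^(j-d)) ((p^^d) v)" by (metis funpow_add comp_apply le_add_diff_inverse2 nat_le_linear)
    also have "\<dots> = r" using dr funpow_fix[of p r] pr by simp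
    finally have "depth p r ((p^^j) v) = 0" unfolding depth_def by (simp add: Least_eq_0)
    then show ?thesis using False by (simp add: d_def)
  qed
qed

lemma depth_anc:
  assumes rt: "rooted_tree V r p" and v: "v \<in> V" and a: "a \<in> ancestors p v"
  shows "depth p r a \<le> depth p r v" "depth p r a = depth p r v \<Longrightarrow> a = v"
proof -
  obtain j where aj: "a = (p^^j) v" using a unfolding ancestors_def by auto
  have dd: "depth p r a = depth p r v - j" using depth_pow[OF rt v] aj by simp
  show "depth p r a \<le> depth p r v" using dd by simp
  assume eq: "depth p r a = depth p r v"
  show "a = v"
  proof (cases "j = 0")
    case True then show ?thesis using aj by simp
  next
    case False
    then have "depth p r v = 0" using dd eq by simp
    moreover have ex: "\<exists>n. (p^^n) v = r" using rt v by (auto simp: rooted_tree_def)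
    ultimately have "(p^^0) v = r" unfolding depth_def by (metis (mono_tags, lifting) LeastI_ex)
    then have "v = r" by simp
    moreover have "p r = r" using rt by (simp add: rooted_tree_def)
    ultimately show ?thesis using aj funpow_fix by metis
  qed
qed

lemma anc_antisym:
  assumes rt: "rooted_tree V r p" and v: "v \<in> V" and "a \<in> ancestors p v" "v \<in> ancestors p a"
  shows "a = v"
proof -
  obtain j where "a = (p^^j) v" using assms(3) unfolding ancestors_def by auto
  then have aV: "a \<in> V" using anc_V[OF rt v] by simp
  have "depth p r a \<le> depth p r v" using depth_anc(1)[OF rt v assms(3)] .
  moreover have "depth p r v \<le> depth p r a" using depth_anc(1)[OF rt aV assms(4)] .
  ultimately show ?thesis using depth_anc(2)[OF rt v assms(3)] by simp
qed

lemma anc_subV: "rooted_tree V r p \<Longrightarrow> v \<in> V \<Longrightarrow> ancestors p v \<subseteq> V"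
  unfolding ancestors_def using anc_V[of V r p v] by auto

lemma lca_prop:
  assumes rt: "rooted_tree V r p" and u: "u \<in> V" and v: "v \<in> V"
  shows "lca p r u v \<in> ancestors p u \<inter> ancestors p v"
    "\<And>b. b \<in> ancestors p u \<inter> ancestors p v \<Longrightarrow> b \<in> ancestors p (lca p r u v)"
proof -
  define C where "C = ancestors p u \<inter> ancestors p v"
  have fC: "finite C" using anc_subV[OF rt u] rt unfolding C_def rooted_tree_def
    by (meson finite_Int finite_subset)
  have rC: "r \<in> C" using rt u v unfolding C_def ancestors_def rooted_tree_def by auto
  define M where "M = Max (depth p r ` C)"
  have "M \<in> depth p r ` C" unfolding M_def using fC rC by (intro Max_in) auto
  then obtain a where aC: "a \<in> C" and aM: "depth p r a = M" by auto
  have amax: "\<forall>b\<in>C. depth p r b \<le> depth p r a" using aM fC unfolding M_def by auto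
  have uV: "\<And>x. x \<in> C \<Longrightarrow> x \<in> V" using anc_subV[OF rt u] unfolding C_def by auto
  have the: "lca p r u v = a" unfolding lca_def C_def[symmetric]
  proof (rule the_equality)
    show "a \<in> C \<and> (\<forall>b\<in>C. depth p r b \<le> depth p r a)" using aC amax by auto
  next
    fix a' assume h: "a' \<in> C \<and> (\<forall>b\<in>C. depth p r b \<le> depth p r a')"
    have a'C: "a' \<in> C" using h by blast
    have eqd: "depth p r a' = depth p r a" using h amax aC a'C by (meson le_antisym)
    have a'u: "a' \<in> ancestors p u" and au: "a \<in> ancestors p u" using a'C aC unfolding C_def by auto
    have "a' \<in> ancestors p a \<or> a \<in> ancestors p a'" using anc_cmp[OF a'u au] .
    then show "a' = a"
    proof
      assume "a' \<in> ancestors p a" then show ?thesis using depth_anc(2)[OF rt uV[OF aC]] eqd by blast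
    next
      assume aa: "a \<in> ancestors p a'" then show ?thesis using depth_anc(2)[OF rt uV[OF a'C] aa] eqd by simp
    qed
  qed
  show "lca p r u v \<in> ancestors p u \<inter> ancestors p v" using the aC C_def by simp
  fix b assume bC: "b \<in> ancestors p u \<inter> ancestors p v"
  have bC': "b \<in> C" using bC C_def by simp
  have bu: "b \<in> ancestors p u" and au: "a \<in> ancestors p u" using bC' aC unfolding C_def by auto
  have "b \<in> ancestors p a \<or> a \<in> ancestors p b" using anc_cmp[OF bu au] .
  then show "b \<in> ancestors p (lca p r u v)"
  proof
    assume ab: "a \<in> ancestors p b"
    have d1: "depth p r b \<le> depth p r a" using amax bC' by blast
    have "a = b" using depth_anc[OF rt uV[OF bC'] ab] d1 by linarith
    then show ?thesis using the anc_refl by metis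
  qed (simp add: the)
qed

lemma lca_char:
  assumes rt: "rooted_tree V r p" and u: "u \<in> V" and v: "v \<in> V"
    and c: "c \<in> ancestors p u \<inter> ancestors p v"
    and all: "\<And>b. b \<in> ancestors p u \<inter> ancestors p v \<Longrightarrow> b \<in> ancestors p c"
  shows "lca p r u v = c"
proof -
  have cV: "c \<in> V" using c anc_subV[OF rt u] by auto
  show ?thesis using anc_antisym[OF rt cV all[OF lca_prop(1)[OF rt u v]] lca_prop(2)[OF rt u v c]] .
qed

lemma w_anc:
  fixes w :: "'v \<Rightarrow> real"
  assumes rt: "rooted_tree V r p" and v: "v \<in> V" and w: "\<forall>v\<in>V. w (p v) \<le> w v"
    and a: "a \<in> ancestors p v"
  shows "w a \<le> w v"
proof -
  have "w ((p^^n) v) \<le> w v" for n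
  proof (induction n)
    case (Suc n)
    have "(p^^n) v \<in> V" using anc_V[OF rt v] .
    then have "w (p ((p^^n) v)) \<le> w ((p^^n) v)" using w by blast
    then show ?case using Suc by simp
  qed simp
  then show ?thesis using a unfolding ancestors_def by auto
qed

lemma lca_sym: "lca p r u v = lca p r v u"
  unfolding lca_def by (simp only: Int_commute[of "ancestors p u" "ancestors p v"])



lemma hier_strong:
  fixes k :: "'a \<Rightarrow> 'a \<Rightarrow> real"
  assumes h: "hierarchy X V r p w"
    and kw: "\<forall>x\<in>X. \<forall>y\<in>X. k x y = w (lca p r (Inl x) (Inl y))"
  shows "strong_kernel X k"
proof -
  have rt: "rooted_tree V r p" using h by (simp add: hierarchy_def)
  have lv: "leaves V p = Inl ` X" using h by (simp add: hierarchy_def)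
  have wv: "\<forall>v\<in>V. 0 \<le> w v \<and> w (p v) \<le> w v" using h by (simp add: hierarchy_def)
  have wm: "\<forall>v\<in>V. w (p v) \<le> w v" using wv by blast
  have XV: "\<And>x. x \<in> X \<Longrightarrow> Inl x \<in> V" using lv unfolding leaves_def by blast
  have lcaV: "\<And>x y. x \<in> X \<Longrightarrow> y \<in> X \<Longrightarrow> lca p r (Inl x) (Inl y) \<in> V"
    using lca_prop(1)[OF rt XV XV] anc_subV[OF rt XV] by blast
  have part1: "\<forall>x\<in>X. \<forall>y\<in>X. k x y = k y x \<and> 0 \<le> k x y"
    using kw lca_sym lcaV wv by metis
  have part2: "min (k x z) (k z y) \<le> k x y" if x: "x \<in> X" and y: "y \<in> X" and z: "z \<in> X" for x y z
  proof -
    define a where "a = lca p r (Inl x) (Inl z)"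
    define b where "b = lca p r (Inl z) (Inl y)"
    define c where "c = lca p r (Inl x) (Inl y)"
    have a1: "a \<in> ancestors p (Inl x)" "a \<in> ancestors p (Inl z)"
      using lca_prop(1)[OF rt XV[OF x] XV[OF z]] a_def by auto
    have b1: "b \<in> ancestors p (Inl z)" "b \<in> ancestors p (Inl y)"
      using lca_prop(1)[OF rt XV[OF z] XV[OF y]] b_def by auto
    have cV: "c \<in> V" using lcaV x y c_def by simp
    have aV: "a \<in> V" using lcaV x z a_def by simp
    have bV: "b \<in> V" using lcaV z y b_def by simp
    have "b \<in> ancestors p a \<or> a \<in> ancestors p b" using anc_cmp[OF b1(1) a1(2)] .
    then show ?thesis
    proof
      assume ba: "b \<in> ancestors p a"
      have "b \<in> ancestors p (Inl x)" using anc_trans[OF ba a1(1)] .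
      then have "b \<in> ancestors p c" using lca_prop(2)[OF rt XV[OF x] XV[OF y]] b1(2) c_def by auto
      then have "w b \<le> w c" using w_anc[OF rt cV wm] by blast
      then show ?thesis using kw x y z a_def b_def c_def by simp
    next
      assume ab: "a \<in> ancestors p b"
      have "a \<in> ancestors p (Inl y)" using anc_trans[OF ab b1(2)] .
      then have "a \<in> ancestors p c" using lca_prop(2)[OF rt XV[OF x] XV[OF y]] a1(1) c_def by auto
      then have "w a \<le> w c" using w_anc[OF rt cV wm] by blast
      then show ?thesis using kw x y z a_def b_def c_def by simp
    qed
  qed
  show ?thesis unfolding strong_kernel_def using part1 part2 by blast
qed



locale ultra =
  fixes X :: "'a set" and k :: "'a \<Rightarrow> 'a \<Rightarrow> real" and g :: "'a \<Rightarrow> nat"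
  assumes fin: "finite X" and ne: "X \<noteq> {}" and sk: "strong_kernel X k" and inj: "inj_on g X"
begin

definition "T = (\<lambda>(x,y). k x y) ` (X \<times> X)"
definition "ts = sorted_list_of_set T"
definition "m = length ts"
definition "idx t = (THE i. i < m \<and> ts!i = t)"
definition "cls i x = {y\<in>X. ts!i \<le> k x y}"
definition node :: "nat \<Rightarrow> 'a \<Rightarrow> 'a + nat" where
  "node i x = Inr (prod_encode (i, Min (g ` cls i x)))"
definition par :: "'a + nat \<Rightarrow> 'a + nat" where
  "par v = (case v of Inl x \<Rightarrow> node (idx (k x x)) x
     | Inr n \<Rightarrow> (case prod_decode n of (i,j) \<Rightarrow> if i = 0 then Inr n else node (i-1) (inv_into X g j)))"
definition "ok i x \<longleftrightarrow> x \<in> X \<and> i < m \<and> ts!i \<le> k x x"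
definition VV :: "('a + nat) set" where "VV = Inl ` X \<union> (\<lambda>(i,x). node i x) ` {(i,x). ok i x}"
definition ww :: "'a + nat \<Rightarrow> real" where
  "ww v = (case v of Inl x \<Rightarrow> k x x | Inr n \<Rightarrow> ts ! fst (prod_decode n))"

lemma ksym: "x \<in> X \<Longrightarrow> y \<in> X \<Longrightarrow> k x y = k y x"
  using sk by (simp add: strong_kernel_def)
lemma knn: "x \<in> X \<Longrightarrow> y \<in> X \<Longrightarrow> 0 \<le> k x y"
  using sk by (simp add: strong_kernel_def)
lemma kult: "x \<in> X \<Longrightarrow> y \<in> X \<Longrightarrow> z \<in> X \<Longrightarrow> min (k x z) (k z y) \<le> k x y"
  using sk unfolding strong_kernel_def by blast
lemma kdiag: "x \<in> X \<Longrightarrow> y \<in> X \<Longrightarrow> k x y \<le> k x x"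
  using kult[of x x y] ksym[of x y] by simp

lemma T_fin: "finite T" unfolding T_def using fin by simp
lemma ts_set: "set ts = T" unfolding ts_def using T_fin by simp
lemma ts_strict: "sorted_wrt (<) ts" unfolding ts_def by (rule strict_sorted_list_of_set)
lemma ts_dist: "distinct ts" unfolding ts_def by simp
lemma kT: "x \<in> X \<Longrightarrow> y \<in> X \<Longrightarrow> k x y \<in> T" unfolding T_def by force
lemma nthT: "i < m \<Longrightarrow> ts!i \<in> T" unfolding m_def using ts_set nth_mem by blast
lemma T_nn: "t \<in> T \<Longrightarrow> 0 \<le> t" unfolding T_def using knn by auto
lemma m_pos: "0 < m"
proof -
  obtain x where "x \<in> X" using ne by blast
  then have "T \<noteq> {}" using kT by blast
  then show ?thesis unfolding m_def using ts_set by (cases ts) auto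
qed

lemma ts_less: "i < j \<Longrightarrow> j < m \<Longrightarrow> ts!i < ts!j"
  unfolding m_def by (rule sorted_wrt_nth_less[OF ts_strict])
lemma ts_mono: "i \<le> j \<Longrightarrow> j < m \<Longrightarrow> ts!i \<le> ts!j"
proof (cases "i = j")
  case False
  assume "i \<le> j" "j < m"
  then have "ts!i < ts!j" using False ts_less[of i j] by simp
  then show ?thesis by simp
qed simp
lemma ts_le_idx: "i < m \<Longrightarrow> j < m \<Longrightarrow> ts!i \<le> ts!j \<Longrightarrow> i \<le> j"
proof (rule ccontr)
  assume "i < m" "j < m" "ts!i \<le> ts!j" "\<not> i \<le> j"
  then have "ts!j < ts!i" using ts_less[of j i] by simp
  then show False using \<open>ts!i \<le> ts!j\<close> by simp
qed

lemma idx: "t \<in> T \<Longrightarrow> idx t < m \<and> ts!(idx t) = t"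
proof -
  assume "t \<in> T"
  then have "\<exists>!i. i < length ts \<and> ts!i = t" using distinct_Ex1[OF ts_dist] ts_set by blast
  then show ?thesis unfolding idx_def m_def by (rule theI')
qed
lemma idx_eq: "i < m \<Longrightarrow> idx (ts!i) = i"
  using idx[OF nthT] ts_dist m_def by (metis nth_eq_iff_index_eq)
lemma ts0: "t \<in> T \<Longrightarrow> ts!0 \<le> t"
  using idx[of t] ts_mono[of 0 "idx t"] by auto

lemma cls_eq: "x \<in> X \<Longrightarrow> z \<in> X \<Longrightarrow> ts!j \<le> k x z \<Longrightarrow> cls j x = cls j z"
  unfolding cls_def
proof (intro Collect_cong conj_cong refl)
  fix y assume x: "x \<in> X" and z: "z \<in> X" and h: "ts!j \<le> k x z" and y: "y \<in> X"
  have "min (k z x) (k x y) \<le> k z y" using kult[OF z y x] .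
  moreover have "min (k x z) (k z y) \<le> k x y" using kult[OF x y z] .
  ultimately show "ts!j \<le> k x y \<longleftrightarrow> ts!j \<le> k z y" using h ksym[OF x z] by linarith
qed

lemma node_cong: "x \<in> X \<Longrightarrow> z \<in> X \<Longrightarrow> ts!j \<le> k x z \<Longrightarrow> node j x = node j z"
  unfolding node_def using cls_eq by simp

lemma cls_in: "x \<in> X \<Longrightarrow> ts!i \<le> k x x \<Longrightarrow> x \<in> cls i x"
  unfolding cls_def by simp
lemma cls_fin: "finite (cls i x)" unfolding cls_def using fin by simp

lemma min_in: "x \<in> X \<Longrightarrow> ts!i \<le> k x x \<Longrightarrow> \<exists>z\<in>cls i x. Min (g ` cls i x) = g z"
proof -
  assume a: "x \<in> X" "ts!i \<le> k x x"
  have "Min (g ` cls i x) \<in> g ` cls i x" using cls_in[OF a] cls_fin[of i x] by (intro Min_in) auto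
  then show ?thesis by auto
qed

lemma node_inj:
  assumes x: "x \<in> X" and y: "y \<in> X" and hx: "ts!i \<le> k x x" and hy: "ts!j \<le> k y y"
    and e: "node i x = node j y"
  shows "i = j \<and> ts!i \<le> k x y"
proof -
  have ij: "i = j" and mm: "Min (g ` cls i x) = Min (g ` cls j y)" using e by (auto simp: node_def)
  obtain z where z: "z \<in> cls i x" "Min (g ` cls i x) = g z" using min_in[OF x hx] by blast
  obtain z' where z': "z' \<in> cls j y" "Min (g ` cls j y) = g z'" using min_in[OF y hy] by blast
  have "z = z'" using inj z z' mm unfolding cls_def inj_on_def by auto
  then have zX: "z \<in> X" and "ts!i \<le> k x z" "ts!i \<le> k y z" using z z' ij unfolding cls_def by auto
  moreover have "min (k x z) (k z y) \<le> k x y" using kult[OF x y zX] .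
  ultimately show ?thesis using ij ksym[OF y zX] by linarith
qed

lemma ok_mono: "ok i x \<Longrightarrow> j \<le> i \<Longrightarrow> ok j x"
  unfolding ok_def using ts_mono by (meson le_less_trans order_trans)

lemma par_node: assumes "ok i x" shows "par (node i x) = node (i-1) x"
proof (cases "i = 0")
  case True then show ?thesis by (simp add: par_def node_def)
next
  case False
  have x: "x \<in> X" and hx: "ts!i \<le> k x x" and im: "i < m" using assms by (auto simp: ok_def)
  obtain z where z: "z \<in> cls i x" "Min (g ` cls i x) = g z" using min_in[OF x hx] by blast
  have zX: "z \<in> X" and kz: "ts!i \<le> k x z" using z unfolding cls_def by auto
  have iv: "inv_into X g (g z) = z" using inv_into_f_f[OF inj zX] .
  have "ts!(i-1) \<le> ts!i" using ts_mono im by simp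
  then have "node (i-1) x = node (i-1) z" using node_cong[OF x zX] kz by simp
  then show ?thesis using False z(2) iv by (simp add: par_def node_def)
qed

lemma ok_idx: "x \<in> X \<Longrightarrow> ok (idx (k x x)) x"
  using idx[OF kT] unfolding ok_def by simp

lemma par_Inl: "par (Inl x) = node (idx (k x x)) x"
  by (simp add: par_def)

lemma pow_node: "ok i x \<Longrightarrow> (par^^n) (node i x) = node (i-n) x"
proof (induction n)
  case (Suc n)
  have "ok (i-n) x" using ok_mono[OF Suc.prems] by simp
  then show ?case using Suc par_node by simp
qed simp

lemma pow_Inl: "x \<in> X \<Longrightarrow> (par^^Suc n) (Inl x) = node (idx (k x x) - n) x"
  by (simp only: funpow_Suc_right comp_apply par_Inl pow_node[OF ok_idx])

lemma anc_Inl: "x \<in> X \<Longrightarrow> b \<in> ancestors par (Inl x) \<Longrightarrow> b = Inl x \<or> (\<exists>j\<le>idx (k x x). b = node j x)"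
proof -
  assume x: "x \<in> X" and "b \<in> ancestors par (Inl x)"
  then obtain n where b: "b = (par^^n) (Inl x)" unfolding ancestors_def by auto
  show ?thesis
  proof (cases n)
    case 0 then show ?thesis using b by simp
  next
    case (Suc n')
    then have "b = node (idx (k x x) - n') x" using b pow_Inl[OF x] by simp
    then show ?thesis by (intro disjI2 exI[of _ "idx (k x x) - n'"]) simp
  qed
qed

lemma node_anc_Inl: "x \<in> X \<Longrightarrow> j \<le> idx (k x x) \<Longrightarrow> node j x \<in> ancestors par (Inl x)"
proof -
  assume x: "x \<in> X" and j: "j \<le> idx (k x x)"
  have "(par^^Suc (idx (k x x) - j)) (Inl x) = node j x" (is "(par^^_) ?v = _") using pow_Inl[OF x, of "idx (k x x) - j"] j by simp
  then have "\<exists>n. node j x = (par^^n) ?v" by (metis)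
  then show ?thesis unfolding ancestors_def by simp
qed

lemma node_anc_node: "ok i x \<Longrightarrow> j \<le> i \<Longrightarrow> node j x \<in> ancestors par (node i x)"
proof -
  assume o: "ok i x" and j: "j \<le> i"
  have "(par^^(i - j)) (node i x) = node j x" (is "(par^^_) ?v = _") using pow_node[OF o, of "i - j"] j by simp
  then have "\<exists>n. node j x = (par^^n) ?v" by (metis)
  then show ?thesis unfolding ancestors_def by simp
qed

definition "x0 = (SOME x. x \<in> X)"
definition "r0 = node 0 x0"

lemma x0X: "x0 \<in> X" unfolding x0_def using ne by (simp add: some_in_eq)

lemma root_eq: "x \<in> X \<Longrightarrow> node 0 x = r0"
  unfolding r0_def using node_cong[OF _ x0X, of x 0] ts0[OF kT[OF _ x0X]] by simp

lemma ok0: "x \<in> X \<Longrightarrow> ok 0 x"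
  unfolding ok_def using m_pos ts0[OF kT] by simp

lemma node_VV: "ok i x \<Longrightarrow> node i x \<in> VV"
  unfolding VV_def by force

lemma VV_cases: "v \<in> VV \<Longrightarrow> (\<And>x. x \<in> X \<Longrightarrow> v = Inl x \<Longrightarrow> P) \<Longrightarrow> (\<And>i x. ok i x \<Longrightarrow> v = node i x \<Longrightarrow> P) \<Longrightarrow> P"
  unfolding VV_def by (elim UnE imageE) auto

lemma node_Inr: "node i x \<noteq> Inl y" by (simp add: node_def)

lemma rt: "rooted_tree VV r0 par"
  unfolding rooted_tree_def
proof (intro conjI ballI)
  have "{(i,x). ok i x} \<subseteq> {..<m} \<times> X" unfolding ok_def by auto
  then have "finite {(i,x). ok i x}" using fin by (meson finite_SigmaI finite_lessThan finite_subset)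
  then show "finite VV" unfolding VV_def using fin by simp
  show "r0 \<in> VV" unfolding r0_def using node_VV[OF ok0[OF x0X]] .
  show "par r0 = r0" unfolding r0_def using par_node[OF ok0[OF x0X]] by simp
next
  fix v assume v: "v \<in> VV"
  then show "par v \<in> VV"
  proof (rule VV_cases)
    fix x assume "x \<in> X" "v = Inl x"
    then show ?thesis using node_VV[OF ok_idx] par_Inl by simp
  next
    fix i x assume o: "ok i x" and "v = node i x"
    then show ?thesis using par_node[OF o] node_VV[OF ok_mono[OF o]] by simp
  qed
  show "\<exists>n. (par ^^ n) v = r0" using v
  proof (rule VV_cases)
    fix x assume x: "x \<in> X" "v = Inl x"
    then have "(par^^Suc (idx (k x x))) v = r0" using pow_Inl[OF x(1)] root_eq[OF x(1)] by simp
    then show ?thesis by blast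
  next
    fix i x assume o: "ok i x" and "v = node i x"
    then have "(par^^i) v = r0" using pow_node[OF o, of i] root_eq o unfolding ok_def by simp
    then show ?thesis by blast
  qed
qed

lemma par_VV_Inr: "v \<in> VV \<Longrightarrow> par v \<noteq> Inl y"
  by (erule VV_cases) (auto simp: par_Inl par_node node_Inr)

lemma leaves: "leaves VV par = Inl ` X"
proof
  show "Inl ` X \<subseteq> leaves VV par"
    unfolding leaves_def VV_def using par_VV_Inr unfolding VV_def by blast
next
  show "leaves VV par \<subseteq> Inl ` X"
  proof
    fix v assume v: "v \<in> leaves VV par"
    then have vV: "v \<in> VV" and nc: "\<And>u. u \<in> VV \<Longrightarrow> u \<noteq> v \<Longrightarrow> par u \<noteq> v"
      unfolding leaves_def by auto
    show "v \<in> Inl ` X" using vV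
    proof (rule VV_cases)
      fix x assume "x \<in> X" "v = Inl x" then show ?thesis by simp
    next
      fix i x assume o: "ok i x" and vi: "v = node i x"
      have x: "x \<in> X" and im: "i < m" and hx: "ts!i \<le> k x x" using o unfolding ok_def by auto
      define ix where "ix = idx (k x x)"
      have ixm: "ix < m" and tix: "ts!ix = k x x" using idx[OF kT[OF x x]] ix_def by auto
      have "i \<le> ix" using ts_le_idx[OF im ixm] hx tix by simp
      show ?thesis
      proof (cases "i = ix")
        case True
        have "par (Inl x) = v" using par_Inl vi True ix_def by simp
        moreover have "Inl x \<in> VV" unfolding VV_def using x by blast
        moreover have "Inl x \<noteq> v" using vi node_Inr by metis
        ultimately show ?thesis using nc by blast
      next
        case False
        then have o1: "ok (i+1) x" using \<open>i \<le> ix\<close> ok_mono[OF ok_idx[OF x]] ix_def by simp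
        have "par (node (i+1) x) = v" using par_node[OF o1] vi by simp
        moreover have "node (i+1) x \<noteq> v" using vi by (simp add: node_def)
        ultimately show ?thesis using nc node_VV[OF o1] by blast
      qed
    qed
  qed
qed

lemma ww_node: "ww (node i x) = ts!i" by (simp add: ww_def node_def)
lemma ww_Inl: "ww (Inl x) = k x x" by (simp add: ww_def)

lemma ww_ok: "v \<in> VV \<Longrightarrow> 0 \<le> ww v \<and> ww (par v) \<le> ww v"
proof (erule VV_cases)
  fix x assume x: "x \<in> X" "v = Inl x"
  then show ?thesis using idx[OF kT[OF x(1) x(1)]] knn[OF x(1) x(1)]
    by (simp add: ww_Inl par_Inl ww_node)
next
  fix i x assume o: "ok i x" "v = node i x"
  then have "i < m" unfolding ok_def by simp
  then show ?thesis using o ts_mono[of "i-1" i] T_nn[OF nthT] by (simp add: par_node ww_node)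
qed

lemma Inl_VV: "x \<in> X \<Longrightarrow> Inl x \<in> VV" unfolding VV_def by blast

lemma lca_k: assumes x: "x \<in> X" and y: "y \<in> X"
  shows "k x y = ww (lca par r0 (Inl x) (Inl y))"
proof (cases "x = y")
  case True
  have "lca par r0 (Inl x) (Inl y) = Inl x"
    using True by (intro lca_char[OF rt Inl_VV[OF x] Inl_VV[OF y]]) (auto simp: anc_refl)
  then show ?thesis using True by (simp add: ww_def)
next
  case False
  define L where "L = idx (k x y)"
  have Lm: "L < m" and tL: "ts!L = k x y" using idx[OF kT[OF x y]] L_def by auto
  have Lx: "L \<le> idx (k x x)" using ts_le_idx[OF Lm, of "idx (k x x)"] idx[OF kT[OF x x]] tL kdiag[OF x y] by simp
  have Ly: "L \<le> idx (k y y)" using ts_le_idx[OF Lm, of "idx (k y y)"] idx[OF kT[OF y y]] tL kdiag[OF y x] ksym[OF x y] by simp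
  have okL: "ok L x" using Lm tL kdiag[OF x y] x unfolding ok_def by simp
  have nxy: "node L x = node L y" using node_cong[OF x y] tL by simp
  have c1: "node L x \<in> ancestors par (Inl x)" using node_anc_Inl[OF x Lx] .
  have c2: "node L x \<in> ancestors par (Inl y)" using node_anc_Inl[OF y Ly] nxy by simp
  have "lca par r0 (Inl x) (Inl y) = node L x"
  proof (rule lca_char[OF rt Inl_VV[OF x] Inl_VV[OF y]])
    show "node L x \<in> ancestors par (Inl x) \<inter> ancestors par (Inl y)" using c1 c2 by simp
  next
    fix b assume b: "b \<in> ancestors par (Inl x) \<inter> ancestors par (Inl y)"
    have bx: "b = Inl x \<or> (\<exists>j\<le>idx (k x x). b = node j x)" using anc_Inl[OF x] b by blast
    have by': "b = Inl y \<or> (\<exists>j\<le>idx (k y y). b = node j y)" using anc_Inl[OF y] b by blast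
    have "b \<noteq> Inl x"
    proof
      assume bI: "b = Inl x"
      then have "Inl x = Inl y \<or> (\<exists>j. Inl x = node j y)" using by' by blast
      then show False using False node_Inr by (metis sum.inject(1))
    qed
    then obtain j where j: "j \<le> idx (k x x)" "b = node j x"
      using bx by blast
    obtain j' where j': "j' \<le> idx (k y y)" "b = node j' y"
      using by' j(2) node_Inr by metis
    have oj: "ok j x" using ok_mono[OF ok_idx[OF x] j(1)] .
    have oj': "ok j' y" using ok_mono[OF ok_idx[OF y] j'(1)] .
    have "j = j' \<and> ts!j \<le> k x y" using node_inj[OF x y] oj oj' j j' unfolding ok_def by metis
    then have "j \<le> L" using ts_le_idx[of j L] oj Lm tL unfolding ok_def by metis
    then show "b \<in> ancestors par (node L x)" using node_anc_node[OF okL] j by simp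
  qed
  then show ?thesis using ww_node tL by simp
qed

lemma exists_hier: "\<exists>V r p w. hierarchy X V r p w \<and>
       (\<forall>x\<in>X. \<forall>y\<in>X. k x y = w (lca p r (Inl x) (Inl y)))"
  using rt leaves ww_ok lca_k unfolding hierarchy_def by blast

end

theorem theorem1:
  fixes X :: "'a set" and k :: "'a \<Rightarrow> 'a \<Rightarrow> real"
  assumes "finite X" and "X \<noteq> {}"
    and "\<forall>x\<in>X. \<forall>y\<in>X. 0 \<le> k x y"
  shows "strong_kernel X k \<longleftrightarrow>
    (\<exists>V r p w. hierarchy X V r p w \<and>
       (\<forall>x\<in>X. \<forall>y\<in>X. k x y = w (lca p r (Inl x) (Inl y))))"
proof
  assume sk: "strong_kernel X k"
  obtain h where "bij_betw h X {0..<card X}" using ex_bij_betw_finite_nat[OF assms(1)] by blast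
  then have inj: "inj_on h X" by (rule bij_betw_imp_inj_on)
  interpret ultra X k h using assms(1,2) sk inj by unfold_locales
  show "\<exists>V r p w. hierarchy X V r p w \<and>
       (\<forall>x\<in>X. \<forall>y\<in>X. k x y = w (lca p r (Inl x) (Inl y)))" by (rule exists_hier)
next
  assume "\<exists>V r p w. hierarchy X V r p w \<and>
       (\<forall>x\<in>X. \<forall>y\<in>X. k x y = w (lca p r (Inl x) (Inl y)))"
  then obtain V r p w where "hierarchy X V r p w"
    "\<forall>x\<in>X. \<forall>y\<in>X. k x y = w (lca p r (Inl x) (Inl y))" by blast
  then show "strong_kernel X k" by (rule hier_strong)
qed

end
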